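(* Fix an integer $N\ge 1$. For real $\mu$, let $\ell^2_\mu\subset\mathbb{C}^\infty$ be the space of sequences with norm $\|\mathbf u\|_{\ell^2_\mu}=\bigl(\sum_{k\ge0}|u_k|^2(k+1)^{2\mu}\bigr)^{1/2}$, and equip $\mathbb{C}^n$ (viewed as the first $n$ entries of a sequence) with the induced norm, also denoted $\ell^2_\mu$. Let $\mathcal L$, $\mathcal B$, $D$ and $\mathcal R$ be as in the context (in particular $\mathcal B:\ell^2_D\to\mathbb{C}^N$ is bounded). Suppose that $\begin{pmatrix}\mathcal B\\ \mathcal L\end{pmatrix}:\ell^2_{\lambda+1}\to\ell^2_\lambda$ is an invertible operator for some $\lambda\in\{D-1,D,D+1,\dots\}$. Let $\mathcal P_n=(I_n,\mathbf 0)$ be the $n\times\infty$ projection onto the first $n$ entries, $R_n=\mathcal P_n\mathcal R\mathcal P_n^\top$ and $A_n=\mathcal P_n\begin{pmatrix}\mathcal B\\ \mathcal L\end{pmatrix}\mathcal P_n^\top$. Then, as $n\to\infty$, $$\|A_nR_n\|_{\ell^2_\lambda}=O(1)\quad\text{and}\quad\|(A_nR_n)^{-1}\|_{\ell^2_\lambda}=O(1).$$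
   Context: Chebyshev polynomials are $T_k(x)=\cos(k\arccos x)$. For integers $\lambda\ge1$, $C^{(\lambda)}_k$ are the ultraspherical polynomials, orthogonal on $[-1,1]$ with weight $(1-x^2)^{\lambda-1/2}$ and normalized so that $C^{(\lambda)}_k(x)=\frac{2^k(\lambda)_k}{k!}x^k+O(x^{k-1})$, $(\lambda)_k=\frac{(\lambda+k-1)!}{(\lambda-1)!}$. Operators act on coefficient sequences indexed from $0$. $(\mathcal D_\lambda\mathbf u)_j=2^{\lambda-1}(\lambda-1)!\,(j+\lambda)u_{j+\lambda}$ (maps Chebyshev coefficients of $u$ to $C^{(\lambda)}$ coefficients of $u^{(\lambda)}$). $(\mathcal S_0\mathbf u)_0=u_0-\tfrac12u_2$, $(\mathcal S_0\mathbf u)_j=\tfrac12(u_j-u_{j+2})$ for $j\ge1$ (Chebyshev to $C^{(1)}$ coefficients); for $\lambda\ge1$, $(\mathcal S_\lambda\mathbf v)_j=\frac{\lambda}{\lambda+j}v_j-\frac{\lambda}{\lambda+j+2}v_{j+2}$ ($C^{(\lambda)}$ to $C^{(\lambda+1)}$ coefficients). $\mathcal M_0[a]$ maps Chebyshev coefficients of $v$ to Chebyshev coefficients of $av$, and for $\lambda\ge1$, $\mathcal M_\lambda[a]$ maps $C^{(\lambda)}$ coefficients of $v$ to $C^{(\lambda)}$ coefficients of $av$. The differential operator (with leading coefficient $1$) is represented on Chebyshev coefficients by $\mathcal L=\mathcal D_N+\sum_{\lambda=1}^{N-1}\mathcal S_{N-1}\cdots\mathcal S_\lambda\mathcal M_\lambda[a^\lambda]\mathcal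 D_\lambda+\mathcal S_{N-1}\cdots\mathcal S_0\mathcal M_0[a^0]$, where the coefficient functions $a^0,\dots,a^{N-1}$ are sufficiently smooth that each $\mathcal M_\lambda[a^\lambda]$ is bounded on every $\ell^2_\mu$. $\mathcal B$ is a linear operator from sequences to $\mathbb{C}^N$ representing exactly $N$ boundary conditions on the Chebyshev coefficients, and $D$ is an integer such that $\mathcal B:\ell^2_D\to\mathbb{C}^N$ is bounded. $\mathcal R=\frac{1}{2^{N-1}(N-1)!}\mathrm{diag}(1,\dots,1,\tfrac1N,\tfrac1{N+1},\dots)$ with $N$ leading ones. $\begin{pmatrix}\mathcal B\\ \mathcal L\end{pmatrix}$ outputs the $N$ entries of $\mathcal B\mathbf u$ followed by $\mathcal L\mathbf u$. *)

theory Defs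
  imports "HOL-Analysis.Analysis"
begin

type_synonym cseq = "nat \<Rightarrow> complex"

definition l2w :: "real \<Rightarrow> cseq set" where
  "l2w \<mu> = {u. summable (\<lambda>k. (cmod (u k))^2 * (real k + 1) powr (2 * \<mu>))}"

definition l2norm :: "real \<Rightarrow> cseq \<Rightarrow> real" where
  "l2norm \<mu> u = sqrt (\<Sum>k. (cmod (u k))^2 * (real k + 1) powr (2 * \<mu>))"

text \<open>Chebyshev polynomials and ultraspherical (Gegenbauer) polynomials (explicit formula,
  normalised with leading coefficient 2^k (lam)_k / k!).\<close>
definition cheb :: "nat \<Rightarrow> real \<Rightarrow> real" where
  "cheb k x = cos (real k * arccos x)"

definition gegen :: "nat \<Rightarrow> nat \<Rightarrow> real \<Rightarrow> real" where
  "gegen lam k x = (\<Sum>m\<le>k div 2. (-1)^m * pochhammer (real lam) (k - m)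
        / (fact m * fact (k - 2*m)) * (2*x)^(k - 2*m))"

definition obasis :: "nat \<Rightarrow> nat \<Rightarrow> real \<Rightarrow> real" where
  "obasis lam k x = (if lam = 0 then cheb k x else gegen lam k x)"

definition oweight :: "nat \<Rightarrow> real \<Rightarrow> real" where
  "oweight lam x = (1 - x^2) powr (real lam - 1/2)"

definition ocoeff :: "nat \<Rightarrow> (real \<Rightarrow> complex) \<Rightarrow> nat \<Rightarrow> complex" where
  "ocoeff lam f j =
     integral {-1..1} (\<lambda>x. f x * complex_of_real (obasis lam j x * oweight lam x))
     / complex_of_real (integral {-1..1} (\<lambda>x. (obasis lam j x)^2 * oweight lam x))"

definition Mmat :: "nat \<Rightarrow> (real \<Rightarrow> complex) \<Rightarrow> nat \<Rightarrow> nat \<Rightarrow> complex" where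
  "Mmat lam a j k = ocoeff lam (\<lambda>x. a x * complex_of_real (obasis lam k x)) j"

definition Mop :: "nat \<Rightarrow> (real \<Rightarrow> complex) \<Rightarrow> cseq \<Rightarrow> cseq" where
  "Mop lam a v = (\<lambda>j. \<Sum>k. Mmat lam a j k * v k)"

definition Dop :: "nat \<Rightarrow> cseq \<Rightarrow> cseq" where
  "Dop lam u = (\<lambda>j. complex_of_real (2^(lam - 1) * fact (lam - 1) * real (j + lam)) * u (j + lam))"

definition Sop :: "nat \<Rightarrow> cseq \<Rightarrow> cseq" where
  "Sop lam v = (\<lambda>j.
     if lam = 0 then (if j = 0 then v 0 - v 2 / 2 else (v j - v (j + 2)) / 2)
     else complex_of_real (real lam / real (lam + j)) * v j
        - complex_of_real (real lam / real (lam + j + 2)) * v (j + 2))"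

fun Schain :: "nat \<Rightarrow> nat \<Rightarrow> cseq \<Rightarrow> cseq" where
  "Schain lam 0 v = v"
| "Schain lam (Suc m) v = Sop (lam + m) (Schain lam m v)"

definition Lop :: "nat \<Rightarrow> (nat \<Rightarrow> real \<Rightarrow> complex) \<Rightarrow> cseq \<Rightarrow> cseq" where
  "Lop N a u = (\<lambda>j. Dop N u j
      + (\<Sum>lam = 1..N - 1. Schain lam (N - lam) (Mop lam (a lam) (Dop lam u)) j)
      + Schain 0 N (Mop 0 (a 0) u) j)"

definition BLop :: "nat \<Rightarrow> (nat \<Rightarrow> cseq \<Rightarrow> complex) \<Rightarrow> (nat \<Rightarrow> real \<Rightarrow> complex) \<Rightarrow> cseq \<Rightarrow> cseq" where
  "BLop N B a u = (\<lambda>j. if j < N then B j u else Lop N a u (j - N))"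

definition Rop :: "nat \<Rightarrow> cseq \<Rightarrow> cseq" where
  "Rop N u = (\<lambda>k. complex_of_real (1 / (2^(N - 1) * fact (N - 1))
                   * (if k < N then 1 else 1 / real k)) * u k)"

text \<open>C^n is identified with sequences vanishing from index n on; P_n^T P_n = trunc n.\<close>
definition trunc :: "nat \<Rightarrow> cseq \<Rightarrow> cseq" where
  "trunc n u = (\<lambda>k. if k < n then u k else 0)"

definition fin_space :: "nat \<Rightarrow> cseq set" where
  "fin_space n = {x. \<forall>k\<ge>n. x k = 0}"

definition An :: "nat \<Rightarrow> (nat \<Rightarrow> cseq \<Rightarrow> complex) \<Rightarrow> (nat \<Rightarrow> real \<Rightarrow> complex) \<Rightarrow> nat \<Rightarrow> cseq \<Rightarrow> cseq" where
  "An N B a n x = trunc n (BLop N B a (trunc n x))"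

definition Rn :: "nat \<Rightarrow> nat \<Rightarrow> cseq \<Rightarrow> cseq" where
  "Rn N n x = trunc n (Rop N (trunc n x))"

definition fin_opnorm :: "real \<Rightarrow> nat \<Rightarrow> (cseq \<Rightarrow> cseq) \<Rightarrow> real" where
  "fin_opnorm \<mu> n T = (SUP x \<in> {x \<in> fin_space n. x \<noteq> (\<lambda>_. 0)}. l2norm \<mu> (T x) / l2norm \<mu> x)"

end

theory Submission
  imports Defs "HOL-Library.Function_Algebras"
begin


definition nrm :: "real \<Rightarrow> cseq \<Rightarrow> real" where
  "nrm \<mu> u = (\<Sum>k. (cmod (u k))^2 * (real k + 1) powr (2 * \<mu>))"

definition bnd :: "real \<Rightarrow> real \<Rightarrow> (cseq \<Rightarrow> cseq) \<Rightarrow> bool" where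
  "bnd \<mu> \<nu> F \<longleftrightarrow> (\<exists>C\<ge>0. \<forall>v\<in>l2w \<mu>. F v \<in> l2w \<nu> \<and> nrm \<nu> (F v) \<le> C * nrm \<mu> v)"

lemma nrm_nonneg: "v \<in> l2w \<mu> \<Longrightarrow> nrm \<mu> v \<ge> 0"
  unfolding nrm_def l2w_def by (auto intro!: suminf_nonneg)

lemma l2norm_nrm: "l2norm \<mu> v = sqrt (nrm \<mu> v)"
  unfolding l2norm_def nrm_def ..

lemma pow_ratio:
  fixes a b K s :: real
  assumes a1: "1 \<le> a" and ab: "a \<le> b" and bK: "b \<le> K * a"
  shows "a powr s \<le> K powr \<bar>s\<bar> * b powr s"
proof -
  have a0: "0 < a" using a1 by linarith
  have b0: "0 < b" using a1 ab by linarith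
  have "1 * a \<le> K * a" using ab bK by linarith
  then have K1: "1 \<le> K" using a0 by (simp only: mult_le_cancel_right)
  have bs: "b powr s \<ge> 0" by (rule powr_ge_zero)
  show ?thesis
  proof (cases "s \<ge> 0")
    case True
    have "a powr s \<le> b powr s" by (rule powr_mono2[OF True]) (use a0 ab in linarith)+
    also have "1 \<le> K powr \<bar>s\<bar>" by (rule ge_one_powr_ge_zero[OF K1]) simp
    then have "1 * b powr s \<le> K powr \<bar>s\<bar> * b powr s" by (rule mult_right_mono[OF _ bs])
    then have "b powr s \<le> K powr \<bar>s\<bar> * b powr s" by simp
    finally show ?thesis .
  next
    case False
    have q: "b / a \<le> K" using bK a0 by (simp add: divide_le_eq)
    have q0: "0 \<le> b / a" using a0 b0 by simp
    have "a powr s = (b / a) powr (-s) * b powr s"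
    proof -
      have "(b / a) powr (-s) = a powr s / b powr s"
        using a0 b0 by (simp add: powr_divide powr_minus_divide)
      then show ?thesis using b0 by simp
    qed
    also have "(b/a) powr (-s) \<le> K powr (-s)"
      by (rule powr_mono2) (use False q q0 in linarith)+
    then have "(b / a) powr (-s) * b powr s \<le> K powr (-s) * b powr s"
      by (rule mult_right_mono[OF _ bs])
    finally show ?thesis using False by simp
  qed
qed

lemma fs_l2w: "\<forall>k\<ge>n. u k = 0 \<Longrightarrow> u \<in> l2w \<mu>"
  unfolding l2w_def by (auto intro!: summable_finite[of "{..<n}"]) (meson leI)

lemma l2w_summ: "v \<in> l2w \<mu> \<Longrightarrow> summable (\<lambda>k. (cmod (v k))^2 * (real k + 1) powr (2 * \<mu>))"
  unfolding l2w_def by auto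

lemma bnd_cong: "(\<And>v. v \<in> l2w \<mu> \<Longrightarrow> F v = G v) \<Longrightarrow> bnd \<mu> \<nu> F \<Longrightarrow> bnd \<mu> \<nu> G"
  unfolding bnd_def by simp

lemma bnd_comp: "bnd \<mu> \<nu> F \<Longrightarrow> bnd \<nu> \<rho> G \<Longrightarrow> bnd \<mu> \<rho> (\<lambda>v. G (F v))"
proof -
  assume "bnd \<mu> \<nu> F" "bnd \<nu> \<rho> G"
  then obtain C1 C2 where C1: "C1 \<ge> 0" "\<forall>v\<in>l2w \<mu>. F v \<in> l2w \<nu> \<and> nrm \<nu> (F v) \<le> C1 * nrm \<mu> v"
    and C2: "C2 \<ge> 0" "\<forall>v\<in>l2w \<nu>. G v \<in> l2w \<rho> \<and> nrm \<rho> (G v) \<le> C2 * nrm \<nu> v"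
    unfolding bnd_def by blast
  show ?thesis unfolding bnd_def
  proof (intro exI[of _ "C2 * C1"] conjI ballI)
    fix v assume v: "v \<in> l2w \<mu>"
    show "G (F v) \<in> l2w \<rho>" using C1 C2 v by blast
    have "nrm \<rho> (G (F v)) \<le> C2 * nrm \<nu> (F v)" using C1 C2 v by blast
    also have "\<dots> \<le> C2 * (C1 * nrm \<mu> v)" using C1 C2 v by (intro mult_left_mono) auto
    finally show "nrm \<rho> (G (F v)) \<le> C2 * C1 * nrm \<mu> v" by simp
  qed (use C1 C2 in auto)
qed

lemma coef_bnd:
  fixes c :: "nat \<Rightarrow> complex"
  assumes C: "C \<ge> 0"
    and h: "\<And>j. (cmod (c j))^2 * (real j + 1) powr (2*\<nu>) \<le> C * (real (j+m) + 1) powr (2*\<mu>)"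
  shows "bnd \<mu> \<nu> (\<lambda>v j. c j * v (j+m))"
  unfolding bnd_def
proof (intro exI[of _ C] conjI ballI)
  fix v assume v: "v \<in> l2w \<mu>"
  define s where "s k = (cmod (v k))^2 * (real k + 1) powr (2 * \<mu>)" for k
  have s: "summable s" using v unfolding s_def l2w_def by auto
  have s0: "s k \<ge> 0" for k unfolding s_def by simp
  have ss: "summable (\<lambda>j. s (j+m))" using s by (simp add: summable_iff_shift)
  have le: "(cmod (c j * v (j+m)))^2 * (real j + 1) powr (2*\<nu>) \<le> C * s (j+m)" for j
  proof -
    have "(cmod (c j * v (j+m)))^2 * (real j + 1) powr (2*\<nu>)
        = ((cmod (c j))^2 * (real j + 1) powr (2*\<nu>)) * (cmod (v (j+m)))^2"
      by (simp add: norm_mult power_mult_distrib)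
    also have "\<dots> \<le> (C * (real (j+m) + 1) powr (2*\<mu>)) * (cmod (v (j+m)))^2"
      using h by (intro mult_right_mono) auto
    finally show ?thesis unfolding s_def by (simp add: algebra_simps)
  qed
  have sm: "summable (\<lambda>j. (cmod (c j * v (j+m)))^2 * (real j + 1) powr (2*\<nu>))"
    by (rule summable_comparison_test[where g="\<lambda>j. C * s (j+m)"]) (use le ss in auto)
  then show "(\<lambda>j. c j * v (j + m)) \<in> l2w \<nu>" unfolding l2w_def by simp
  have "nrm \<nu> (\<lambda>j. c j * v (j + m)) \<le> (\<Sum>j. C * s (j+m))"
    unfolding nrm_def by (rule suminf_le) (use le sm ss in auto)
  also have "\<dots> = C * (\<Sum>j. s (j+m))" using ss by (rule suminf_mult)
  also have "(\<Sum>j. s (j+m)) \<le> (\<Sum>j. s j)"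
    using suminf_split_initial_segment[OF s, of m] s0 by (simp add: sum_nonneg)
  then have "C * (\<Sum>j. s (j+m)) \<le> C * (\<Sum>j. s j)" using C by (rule mult_left_mono)
  finally show "nrm \<nu> (\<lambda>j. c j * v (j + m)) \<le> C * nrm \<mu> v" unfolding nrm_def s_def .
qed (use C in auto)

lemma sq_add_le: "(cmod (a + b))^2 \<le> 2 * (cmod a)^2 + 2 * (cmod b)^2"
proof -
  have "cmod (a+b) \<le> cmod a + cmod b" by (rule norm_triangle_ineq)
  then have "(cmod (a+b))^2 \<le> (cmod a + cmod b)^2" by (intro power_mono) auto
  moreover have "0 \<le> (cmod a - cmod b)^2" by simp
  ultimately show ?thesis unfolding power2_sum power2_diff by linarith
qed

lemma bnd_add: "bnd \<mu> \<nu> F \<Longrightarrow> bnd \<mu> \<nu> G \<Longrightarrow> bnd \<mu> \<nu> (\<lambda>v j. F v j + G v j)"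
proof -
  assume "bnd \<mu> \<nu> F" "bnd \<mu> \<nu> G"
  then obtain C1 C2 where C1: "C1 \<ge> 0" "\<forall>v\<in>l2w \<mu>. F v \<in> l2w \<nu> \<and> nrm \<nu> (F v) \<le> C1 * nrm \<mu> v"
    and C2: "C2 \<ge> 0" "\<forall>v\<in>l2w \<mu>. G v \<in> l2w \<nu> \<and> nrm \<nu> (G v) \<le> C2 * nrm \<mu> v"
    unfolding bnd_def by blast
  show ?thesis unfolding bnd_def
  proof (intro exI[of _ "2 * C1 + 2 * C2"] conjI ballI)
    fix v assume v: "v \<in> l2w \<mu>"
    define w where "w k = (real k + 1) powr (2 * \<nu>)" for k
    have w0: "w k \<ge> 0" for k unfolding w_def by simp
    have sF: "summable (\<lambda>k. (cmod (F v k))^2 * w k)" using C1 v unfolding l2w_def w_def by blast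
    have sG: "summable (\<lambda>k. (cmod (G v k))^2 * w k)" using C2 v unfolding l2w_def w_def by blast
    have le: "(cmod (F v k + G v k))^2 * w k \<le> 2 * ((cmod (F v k))^2 * w k) + 2 * ((cmod (G v k))^2 * w k)" for k
      using mult_right_mono[OF sq_add_le[of "F v k" "G v k"] w0[of k]] by (simp add: algebra_simps)
    have sS: "summable (\<lambda>k. 2 * ((cmod (F v k))^2 * w k) + 2 * ((cmod (G v k))^2 * w k))"
      using sF sG by (intro summable_add summable_mult)
    have sm: "summable (\<lambda>k. (cmod (F v k + G v k))^2 * w k)"
      by (rule summable_comparison_test[OF _ sS]) (use le w0 in auto)
    then show "(\<lambda>j. F v j + G v j) \<in> l2w \<nu>" unfolding l2w_def w_def by simp
    have "nrm \<nu> (\<lambda>j. F v j + G v j) \<le> (\<Sum>k. 2 * ((cmod (F v k))^2 * w k) + 2 * ((cmod (G v k))^2 * w k))"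
      unfolding nrm_def w_def[symmetric] by (rule suminf_le) (use le sm sS in auto)
    also have "\<dots> = 2 * nrm \<nu> (F v) + 2 * nrm \<nu> (G v)"
      unfolding nrm_def w_def[symmetric] using sF sG
      by (subst suminf_add[symmetric]) (auto intro: summable_mult simp: suminf_mult)
    also have "\<dots> \<le> 2 * (C1 * nrm \<mu> v) + 2 * (C2 * nrm \<mu> v)" using C1 C2 v by (intro add_mono) auto
    finally show "nrm \<nu> (\<lambda>j. F v j + G v j) \<le> (2 * C1 + 2 * C2) * nrm \<mu> v" by (simp add: algebra_simps)
  qed (use C1 C2 in auto)
qed

lemma bnd_zero: "bnd \<mu> \<nu> (\<lambda>v j. 0)"
  unfolding bnd_def l2w_def nrm_def by (auto intro!: exI[of _ 0])

lemma bnd_sum: "finite I \<Longrightarrow> (\<And>i. i \<in> I \<Longrightarrow> bnd \<mu> \<nu> (F i)) \<Longrightarrow> bnd \<mu> \<nu> (\<lambda>v j. \<Sum>i\<in>I. F i v j)"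
proof (induction I rule: finite_induct)
  case empty then show ?case by (simp add: bnd_zero)
next
  case (insert x I)
  then have "bnd \<mu> \<nu> (\<lambda>v j. F x v j + (\<Sum>i\<in>I. F i v j))" by (intro bnd_add) auto
  then show ?case using insert by simp
qed

lemma nrm_mono: "\<nu>' \<le> \<nu> \<Longrightarrow> v \<in> l2w \<nu> \<Longrightarrow> v \<in> l2w \<nu>' \<and> nrm \<nu>' v \<le> nrm \<nu> v"
proof -
  assume a: "\<nu>' \<le> \<nu>" "v \<in> l2w \<nu>"
  have le: "(cmod (v k))^2 * (real k + 1) powr (2 * \<nu>') \<le> (cmod (v k))^2 * (real k + 1) powr (2 * \<nu>)" for k
    using a by (intro mult_left_mono powr_mono) auto
  have s: "summable (\<lambda>k. (cmod (v k))^2 * (real k + 1) powr (2 * \<nu>))" using a unfolding l2w_def by auto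
  have s': "summable (\<lambda>k. (cmod (v k))^2 * (real k + 1) powr (2 * \<nu>'))"
    by (rule summable_comparison_test[OF _ s]) (use le in auto)
  show ?thesis unfolding l2w_def nrm_def using s s' le by (auto intro: suminf_le)
qed

lemma bnd_mono: "\<nu>' \<le> \<nu> \<Longrightarrow> bnd \<mu> \<nu> F \<Longrightarrow> bnd \<mu> \<nu>' F"
proof -
  assume a: "\<nu>' \<le> \<nu>" "bnd \<mu> \<nu> F"
  then obtain C where C: "C \<ge> 0" "\<forall>v\<in>l2w \<mu>. F v \<in> l2w \<nu> \<and> nrm \<nu> (F v) \<le> C * nrm \<mu> v"
    unfolding bnd_def by blast
  have "\<forall>v\<in>l2w \<mu>. F v \<in> l2w \<nu>' \<and> nrm \<nu>' (F v) \<le> C * nrm \<mu> v"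
  proof
    fix v assume "v \<in> l2w \<mu>"
    then have "F v \<in> l2w \<nu>" "nrm \<nu> (F v) \<le> C * nrm \<mu> v" using C by auto
    with nrm_mono[OF a(1) this(1)] show "F v \<in> l2w \<nu>' \<and> nrm \<nu>' (F v) \<le> C * nrm \<mu> v" by linarith
  qed
  then show ?thesis unfolding bnd_def using C by blast
qed

lemma w_succ: "(real j + 1) powr (2 * (\<mu> + 1)) = (real j + 1) powr (2 * \<mu>) * (real j + 1)^2"
proof -
  have "(real j + 1) powr (2 * (\<mu> + 1)) = (real j + 1) powr (2 * \<mu>) * (real j + 1) powr 2"
    by (simp add: powr_add algebra_simps)
  then show ?thesis by (simp add: powr_numeral)
qed

lemma w_shift: "(real j + 1) powr s \<le> (real m + 1) powr \<bar>s\<bar> * (real (j+m) + 1) powr s"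
  by (rule pow_ratio) (auto simp: algebra_simps)

lemma bnd_Sop0: "bnd \<mu> \<mu> (Sop 0)"
proof -
  let ?c1 = "\<lambda>j::nat. if j = 0 then 1 else (1/2::complex)"
  let ?c2 = "\<lambda>j::nat. (-1/2::complex)"
  have b1: "bnd \<mu> \<mu> (\<lambda>v j. ?c1 j * v (j+0))"
    by (rule coef_bnd[where C=1]) (auto simp: powr_ge_zero power2_eq_square)
  have b2: "bnd \<mu> \<mu> (\<lambda>v j. ?c2 j * v (j+2))"
  proof (rule coef_bnd[where C="3 powr \<bar>2*\<mu>\<bar>"])
    fix j
    have "(cmod (?c2 j))^2 * (real j + 1) powr (2*\<mu>) \<le> 1 * (real j + 1) powr (2*\<mu>)"
      by (intro mult_right_mono) (auto simp: power2_eq_square)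
    also have "\<dots> \<le> (real 2 + 1) powr \<bar>2*\<mu>\<bar> * (real (j+2) + 1) powr (2*\<mu>)"
      using w_shift[of j "2*\<mu>" 2] by simp
    finally show "(cmod (?c2 j))^2 * (real j + 1) powr (2*\<mu>) \<le> 3 powr \<bar>2*\<mu>\<bar> * (real (j+2) + 1) powr (2*\<mu>)"
      by simp
  qed simp
  have "bnd \<mu> \<mu> (\<lambda>v j. ?c1 j * v (j+0) + ?c2 j * v (j+2))" by (rule bnd_add[OF b1 b2])
  moreover have "(\<lambda>j. ?c1 j * v (j+0) + ?c2 j * v (j+2)) = Sop 0 v" for v
  proof
    fix j show "?c1 j * v (j+0) + ?c2 j * v (j+2) = Sop 0 v j"
      by (cases "j = 0") (simp_all add: Sop_def diff_divide_distrib numeral_2_eq_2)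
  qed
  ultimately show ?thesis by (simp add: bnd_cong)
qed

lemma bnd_Sop: "l \<ge> 1 \<Longrightarrow> bnd \<mu> (\<mu>+1) (Sop l)"
proof -
  assume l: "l \<ge> 1"
  let ?c1 = "\<lambda>j::nat. complex_of_real (real l / real (l + j))"
  let ?c2 = "\<lambda>j::nat. - complex_of_real (real l / real (l + j + 2))"
  have b1: "bnd \<mu> (\<mu>+1) (\<lambda>v j. ?c1 j * v (j+0))"
  proof (rule coef_bnd[where C="(real l)^2"])
    fix j
    have q: "(real l / real (l + j)) * (real j + 1) \<le> real l"
      using l by (simp add: divide_simps)
    have e: "(cmod (?c1 j))^2 = (real l / real (l + j))^2"
      by (simp only: norm_of_real power2_abs)
    have "(cmod (?c1 j))^2 * (real j + 1) powr (2*(\<mu>+1))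
       = ((real l / real (l + j)) * (real j + 1))^2 * (real j + 1) powr (2*\<mu>)"
      unfolding e w_succ power_mult_distrib by (simp only: mult_ac)
    also have "\<dots> \<le> (real l)^2 * (real j + 1) powr (2*\<mu>)"
      using q by (intro mult_right_mono power_mono) auto
    finally show "(cmod (?c1 j))^2 * (real j + 1) powr (2*(\<mu>+1)) \<le> (real l)^2 * (real (j+0) + 1) powr (2*\<mu>)"
      by simp
  qed simp
  have b2: "bnd \<mu> (\<mu>+1) (\<lambda>v j. ?c2 j * v (j+2))"
  proof (rule coef_bnd[where C="(real l)^2 * 3 powr \<bar>2*\<mu>\<bar>"])
    fix j
    have q: "(real l / real (l + j + 2)) * (real j + 1) \<le> real l"
      using l by (simp add: divide_simps)
    have e: "(cmod (?c2 j))^2 = (real l / real (l + j + 2))^2"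
      by (simp only: norm_minus_cancel norm_of_real power2_abs)
    have "(cmod (?c2 j))^2 * (real j + 1) powr (2*(\<mu>+1))
       = ((real l / real (l + j + 2)) * (real j + 1))^2 * (real j + 1) powr (2*\<mu>)"
      unfolding e w_succ power_mult_distrib by (simp only: mult_ac)
    also have "\<dots> \<le> (real l)^2 * (real j + 1) powr (2*\<mu>)"
      using q by (intro mult_right_mono power_mono) auto
    also have "\<dots> \<le> (real l)^2 * ((real 2 + 1) powr \<bar>2*\<mu>\<bar> * (real (j+2) + 1) powr (2*\<mu>))"
      using w_shift[of j "2*\<mu>" 2] by (intro mult_left_mono) auto
    finally show "(cmod (?c2 j))^2 * (real j + 1) powr (2*(\<mu>+1)) \<le> (real l)^2 * 3 powr \<bar>2*\<mu>\<bar> * (real (j+2) + 1) powr (2*\<mu>)"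
      by (simp add: mult.assoc)
  qed simp
  have "bnd \<mu> (\<mu>+1) (\<lambda>v j. ?c1 j * v (j+0) + ?c2 j * v (j+2))" by (rule bnd_add[OF b1 b2])
  moreover have "(\<lambda>j. ?c1 j * v (j+0) + ?c2 j * v (j+2)) = Sop l v" for v
    unfolding Sop_def using l by (auto simp: algebra_simps)
  ultimately show ?thesis by (simp add: bnd_cong)
qed

lemma bnd_Dop: "l \<ge> 1 \<Longrightarrow> bnd (\<mu>+1) \<mu> (Dop l)"
proof -
  assume l: "l \<ge> 1"
  define K :: real where "K = 2^(l - 1) * fact (l - 1)"
  have K0: "K \<ge> 0" unfolding K_def by simp
  let ?c = "\<lambda>j::nat. complex_of_real (K * real (j + l))"
  have "bnd (\<mu>+1) \<mu> (\<lambda>v j. ?c j * v (j+l))"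
  proof (rule coef_bnd[where C="K^2 * (real l + 1) powr \<bar>2*\<mu>\<bar>"])
    fix j
    have "(cmod (?c j))^2 * (real j + 1) powr (2*\<mu>) = K^2 * (real (j+l))^2 * (real j + 1) powr (2*\<mu>)"
      by (simp only: norm_of_real power2_abs power_mult_distrib)
    also have "\<dots> \<le> K^2 * (real (j+l) + 1)^2 * ((real l + 1) powr \<bar>2*\<mu>\<bar> * (real (j+l) + 1) powr (2*\<mu>))"
      using w_shift[of j "2*\<mu>" l] by (intro mult_mono power_mono mult_left_mono) auto
    also have "\<dots> = K^2 * (real l + 1) powr \<bar>2*\<mu>\<bar> * (real (j+l) + 1) powr (2*(\<mu>+1))"
      unfolding w_succ[of "j+l"] by (simp only: mult_ac)
    finally show "(cmod (?c j))^2 * (real j + 1) powr (2*\<mu>) \<le> K^2 * (real l + 1) powr \<bar>2*\<mu>\<bar> * (real (j+l) + 1) powr (2*(\<mu>+1))" .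
  qed simp
  moreover have "(\<lambda>j. ?c j * v (j+l)) = Dop l v" for v
    unfolding Dop_def K_def by simp
  ultimately show ?thesis by (simp add: bnd_cong)
qed


lemma bnd_id: "bnd \<mu> \<mu> (\<lambda>v. v)"
proof -
  have "bnd \<mu> \<mu> (\<lambda>v j. 1 * v (j+0))" by (rule coef_bnd[where C=1]) auto
  then show ?thesis by simp
qed

lemma Schain_split: "Schain l (Suc m) v = Schain (Suc l) m (Sop l v)"
  by (induction m) auto

lemma bnd_Schain: "l \<ge> 1 \<Longrightarrow> bnd \<mu> (\<mu> + real m) (Schain l m)"
proof (induction m)
  case 0 then show ?case using bnd_id by simp
next
  case (Suc m)
  have "bnd \<mu> (\<mu> + real m + 1) (\<lambda>v. Sop (l+m) (Schain l m v))"
    using Suc by (intro bnd_comp[OF _ bnd_Sop]) auto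
  moreover have "\<mu> + real (Suc m) = \<mu> + real m + 1" by simp
  ultimately show ?case by (simp only: Schain.simps)
qed

lemma bnd_from:
  assumes "\<exists>C. \<forall>v\<in>l2w \<mu>. F v \<in> l2w \<nu> \<and> l2norm \<nu> (F v) \<le> C * l2norm \<mu> v"
  shows "bnd \<mu> \<nu> F"
proof -
  obtain C where C: "\<forall>v\<in>l2w \<mu>. F v \<in> l2w \<nu> \<and> l2norm \<nu> (F v) \<le> C * l2norm \<mu> v" using assms by blast
  show ?thesis unfolding bnd_def
  proof (intro exI[of _ "C^2"] conjI ballI)
    fix v assume v: "v \<in> l2w \<mu>"
    have Fv: "F v \<in> l2w \<nu>" and le: "sqrt (nrm \<nu> (F v)) \<le> C * sqrt (nrm \<mu> v)"
      using C v by (auto simp: l2norm_nrm)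
    show "F v \<in> l2w \<nu>" by fact
    have n1: "nrm \<nu> (F v) \<ge> 0" using Fv by (rule nrm_nonneg)
    have n2: "nrm \<mu> v \<ge> 0" using v by (rule nrm_nonneg)
    have "(sqrt (nrm \<nu> (F v)))^2 \<le> (C * sqrt (nrm \<mu> v))^2"
      using le n1 by (intro power_mono) auto
    then show "nrm \<nu> (F v) \<le> C^2 * nrm \<mu> v" using n1 n2 by (simp add: power_mult_distrib)
  qed simp
qed

definition rc :: "nat \<Rightarrow> nat \<Rightarrow> real" where
  "rc N k = 1 / (2^(N - 1) * fact (N - 1)) * (if k < N then 1 else 1 / real k)"

lemma Rop_rc: "Rop N u = (\<lambda>k. complex_of_real (rc N k) * u k)"
  unfolding Rop_def rc_def ..

lemma rc_pos: "N \<ge> 1 \<Longrightarrow> rc N k > 0"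
  unfolding rc_def by (auto simp: not_less)

lemma rc_upper: "N \<ge> 1 \<Longrightarrow> rc N k * (real k + 1) \<le> 1 / (2^(N - 1) * fact (N - 1)) * (real N + 1)"
proof -
  assume N: "N \<ge> 1"
  have c0: "0 < 1 / (2^(N - 1) * fact (N - 1) :: real)" by simp
  have "(if k < N then 1 else 1 / real k) * (real k + 1) \<le> real N + 1"
  proof (cases "k < N")
    case True then show ?thesis by simp
  next
    case False
    then have k: "real k \<ge> 1" "real k \<ge> real N" using N by auto
    then have "(real k + 1) / real k \<le> 2" by (simp add: divide_simps)
    then show ?thesis using False N by simp
  qed
  then have "1 / (2^(N - 1) * fact (N - 1)) * ((if k < N then 1 else 1 / real k) * (real k + 1))
     \<le> 1 / (2^(N - 1) * fact (N - 1)) * (real N + 1)" using c0 by (intro mult_left_mono) auto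
  then show ?thesis unfolding rc_def by (simp only: mult.assoc)
qed

lemma rc_lower: "N \<ge> 1 \<Longrightarrow> 1 / (2^(N - 1) * fact (N - 1)) \<le> rc N k * (real k + 1)"
proof -
  assume N: "N \<ge> 1"
  have c0: "0 < 1 / (2^(N - 1) * fact (N - 1) :: real)" by simp
  have "1 \<le> (if k < N then 1 else 1 / real k) * (real k + 1)"
  proof (cases "k < N")
    case True then show ?thesis by simp
  next
    case False
    then have k: "real k \<ge> 1" using N by auto
    then show ?thesis using False by (simp add: divide_simps)
  qed
  then have "1 / (2^(N - 1) * fact (N - 1)) * 1 \<le> 1 / (2^(N - 1) * fact (N - 1)) * ((if k < N then 1 else 1 / real k) * (real k + 1))"
    using c0 by (intro mult_left_mono) auto
  then show ?thesis unfolding rc_def by (simp only: mult.assoc mult_1_right)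
qed

lemma bnd_Rop: "N \<ge> 1 \<Longrightarrow> bnd \<mu> (\<mu>+1) (Rop N)"
proof -
  assume N: "N \<ge> 1"
  define c0 :: real where "c0 = 1 / (2^(N - 1) * fact (N - 1)) * (real N + 1)"
  have "bnd \<mu> (\<mu>+1) (\<lambda>v j. complex_of_real (rc N j) * v (j+0))"
  proof (rule coef_bnd[where C="c0^2"])
    fix j
    have e: "(cmod (complex_of_real (rc N j)))^2 = (rc N j)^2"
      by (simp only: norm_of_real power2_abs)
    have "(cmod (complex_of_real (rc N j)))^2 * (real j + 1) powr (2*(\<mu>+1))
        = (rc N j * (real j + 1))^2 * (real j + 1) powr (2*\<mu>)"
      unfolding e w_succ power_mult_distrib by (simp only: mult_ac)
    also have "\<dots> \<le> c0^2 * (real j + 1) powr (2*\<mu>)"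
      using rc_upper[OF N, of j] rc_pos[OF N, of j] unfolding c0_def
      by (intro mult_right_mono power_mono) auto
    finally show "(cmod (complex_of_real (rc N j)))^2 * (real j + 1) powr (2*(\<mu>+1)) \<le> c0^2 * (real (j+0) + 1) powr (2*\<mu>)"
      by simp
  qed simp
  then show ?thesis by (rule bnd_cong[rotated]) (simp add: Rop_rc)
qed

lemma Rop_lower:
  assumes N: "N \<ge> 1" and R: "Rop N v \<in> l2w (\<mu>+1)"
  shows "nrm \<mu> v \<le> (2^(N - 1) * fact (N - 1))^2 * nrm (\<mu>+1) (Rop N v)"
proof -
  define c :: real where "c = 1 / (2^(N - 1) * fact (N - 1))"
  have c0: "c > 0" unfolding c_def by simp
  have ic: "(2^(N - 1) * fact (N - 1)) = 1 / c" unfolding c_def by simp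
  have le: "(cmod (v k))^2 * (real k + 1) powr (2 * \<mu>)
        \<le> (1/c)^2 * ((cmod (Rop N v k))^2 * (real k + 1) powr (2 * (\<mu>+1)))" for k
  proof -
    have e: "(cmod (Rop N v k))^2 * (real k + 1) powr (2 * (\<mu>+1))
        = (rc N k * (real k + 1))^2 * ((cmod (v k))^2 * (real k + 1) powr (2 * \<mu>))"
      unfolding Rop_rc w_succ norm_mult norm_of_real power_mult_distrib power2_abs by (simp only: mult_ac)
    have "c^2 \<le> (rc N k * (real k + 1))^2"
      using rc_lower[OF N, of k] c0 unfolding c_def by (intro power_mono) auto
    then have "c^2 * ((cmod (v k))^2 * (real k + 1) powr (2 * \<mu>))
        \<le> (cmod (Rop N v k))^2 * (real k + 1) powr (2 * (\<mu>+1))"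
      unfolding e by (intro mult_right_mono) auto
    then show ?thesis using c0 by (simp add: divide_simps mult.commute)
  qed
  have sR: "summable (\<lambda>k. (cmod (Rop N v k))^2 * (real k + 1) powr (2 * (\<mu>+1)))"
    using R unfolding l2w_def by simp
  have sv: "summable (\<lambda>k. (cmod (v k))^2 * (real k + 1) powr (2 * \<mu>))"
    by (rule summable_comparison_test[OF _ summable_mult[OF sR]]) (use le in auto)
  have "nrm \<mu> v \<le> (\<Sum>k. (1/c)^2 * ((cmod (Rop N v k))^2 * (real k + 1) powr (2 * (\<mu>+1))))"
    unfolding nrm_def by (rule suminf_le) (use le sv sR in \<open>auto intro: summable_mult\<close>)
  also have "\<dots> = (1/c)^2 * nrm (\<mu>+1) (Rop N v)" unfolding nrm_def by (rule suminf_mult[OF sR])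
  finally show ?thesis unfolding ic .
qed



definition sc :: "complex \<Rightarrow> cseq \<Rightarrow> cseq" where "sc c x = (\<lambda>k. c * x k)"

lemma vs_sc: "vector_space sc"
  by unfold_locales (auto simp: sc_def algebra_simps fun_eq_iff)

lemma sum_app: "(sum f A) (j::nat) = (\<Sum>a\<in>A. (f a j :: complex))"
  by (induction A rule: infinite_finite_induct) auto

definition ee :: "nat \<Rightarrow> cseq" where "ee k = (\<lambda>j. if j = k then 1 else 0)"

lemma inj_surj_fin:
  fixes F :: "cseq \<Rightarrow> cseq"
  assumes add: "\<And>x y. F (\<lambda>k. x k + y k) = (\<lambda>k. F x k + F y k)"
    and smul: "\<And>c x. F (\<lambda>k. c * x k) = (\<lambda>k. c * F x k)"
    and into: "\<And>x. x \<in> fin_space n \<Longrightarrow> F x \<in> fin_space n"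
    and inj: "inj_on F (fin_space n)"
  shows "F ` fin_space n = fin_space n"
proof -
  interpret vs: vector_space sc by (rule vs_sc)
  have ms: "module sc" by (simp add: module_iff_vector_space vs_sc)
  interpret lf: module_hom sc sc F
    unfolding module_hom_iff using ms
    by (auto simp: plus_fun_def sc_def add smul)
  define E where "E = ee ` {..<n}"
  have injee: "inj ee" unfolding inj_def ee_def fun_eq_iff by (metis one_neq_zero)
  have fE: "finite E" and cE: "card E = n" unfolding E_def using injee
    by (auto simp: card_image inj_on_subset)
  have sub: "vs.subspace (fin_space n)"
    unfolding vs.subspace_def fin_space_def by (auto simp: sc_def)
  have EF: "E \<subseteq> fin_space n" unfolding E_def fin_space_def ee_def by auto
  have spanE: "vs.span E = fin_space n"
  proof
    show "vs.span E \<subseteq> fin_space n" by (rule vs.span_minimal[OF EF sub])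
    show "fin_space n \<subseteq> vs.span E"
    proof
      fix x assume x: "x \<in> fin_space n"
      have "x = (\<Sum>k<n. sc (x k) (ee k))"
      proof
        fix j
        show "x j = (\<Sum>k<n. sc (x k) (ee k)) j"
        proof (cases "j < n")
          case True
          then show ?thesis unfolding sum_app sc_def ee_def by (simp add: if_distrib cong: if_cong)
        next
          case False
          then show ?thesis using x unfolding sum_app sc_def ee_def fin_space_def by auto
        qed
      qed
      also have "\<dots> \<in> vs.span E"
        by (intro vs.span_sum vs.span_scale vs.span_base) (auto simp: E_def)
      finally show "x \<in> vs.span E" .
    qed
  qed
  have indE: "vs.independent E"
  proof (rule vs.independent_if_scalars_zero[OF fE])
    fix f x assume s: "(\<Sum>x\<in>E. sc (f x) x) = 0" and xE: "x \<in> E"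
    then obtain k where k: "k < n" "x = ee k" unfolding E_def by auto
    have "0 = (\<Sum>x\<in>E. sc (f x) x) k" using s by simp
    also have "\<dots> = (\<Sum>y\<in>E. f y * y k)" unfolding sum_app sc_def ..
    also have "\<dots> = f x * x k"
      by (rule sum.remove[OF fE xE, THEN trans]) (auto intro!: sum.neutral simp: E_def ee_def k split: if_splits)
    also have "\<dots> = f x" using k by (simp add: ee_def)
    finally show "f x = 0" by simp
  qed
  have injE: "inj_on F (vs.span E)" using inj spanE by simp
  have indFE: "vs.independent (F ` E)" by (rule lf.independent_injective_image[OF indE injE])
  have cFE: "card (F ` E) = n" using cE inj EF by (simp add: card_image inj_on_subset)
  have FEsub: "F ` E \<subseteq> vs.span E" using EF into spanE by auto
  have "fin_space n \<subseteq> vs.span (F ` E)"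
  proof
    fix y assume y: "y \<in> fin_space n"
    show "y \<in> vs.span (F ` E)"
    proof (rule ccontr)
      assume ny: "y \<notin> vs.span (F ` E)"
      then have ny': "y \<notin> F ` E" using vs.span_base by blast
      have "vs.independent (insert y (F ` E))" using vs.independent_insertI[OF ny indFE] .
      moreover have "insert y (F ` E) \<subseteq> vs.span E" using FEsub y spanE by auto
      ultimately have "card (insert y (F ` E)) \<le> card E"
        using vs.independent_span_bound[OF fE] by blast
      moreover have "card (insert y (F ` E)) = n + 1"
        using ny' cFE fE by (simp add: card_insert_if)
      ultimately show False using cE by simp
    qed
  qed
  also have "vs.span (F ` E) = F ` fin_space n" using lf.span_image spanE by simp
  finally show ?thesis using into by auto
qed



definition fsup :: "cseq \<Rightarrow> bool" where "fsup u \<longleftrightarrow> (\<exists>n. \<forall>k\<ge>n. u k = 0)"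

lemma fsup_l2w: "fsup u \<Longrightarrow> u \<in> l2w \<mu>"
  unfolding fsup_def using fs_l2w by blast

lemma fsup_summ: "fsup u \<Longrightarrow> summable (\<lambda>k. c k * u k)"
proof -
  assume "fsup u"
  then obtain n where n: "\<forall>k\<ge>n. u k = 0" unfolding fsup_def by blast
  show ?thesis by (rule summable_finite[of "{..<n}"]) (use n in auto)
qed

lemma fsup_Dop: "fsup u \<Longrightarrow> fsup (Dop l u)"
  unfolding fsup_def Dop_def by (metis add.commute mult_zero_right trans_le_add2)

lemma fsup_trunc: "fsup (trunc n u)"
  unfolding fsup_def trunc_def by (rule exI[of _ n]) simp

lemma fsup_Rop: "fsup u \<Longrightarrow> fsup (Rop N u)"
  unfolding fsup_def Rop_def by (metis mult_zero_right)

lemma Sop_add: "Sop l (\<lambda>k. u k + v k) = (\<lambda>j. Sop l u j + Sop l v j)"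
proof
  fix j show "Sop l (\<lambda>k. u k + v k) j = Sop l u j + Sop l v j"
  proof (cases "l = 0")
    case True then show ?thesis by (cases "j = 0") (simp_all add: Sop_def field_simps)
  next
    case False then show ?thesis by (simp add: Sop_def ring_distribs)
  qed
qed

lemma Sop_smul: "Sop l (\<lambda>k. c * u k) = (\<lambda>j. c * Sop l u j)"
  by (auto simp: Sop_def fun_eq_iff algebra_simps)

lemma Schain_add: "Schain l m (\<lambda>k. u k + v k) = (\<lambda>j. Schain l m u j + Schain l m v j)"
  by (induction m) (simp_all add: Sop_add)

lemma Schain_smul: "Schain l m (\<lambda>k. c * u k) = (\<lambda>j. c * Schain l m u j)"
  by (induction m) (simp_all add: Sop_smul)

lemma Dop_add: "Dop l (\<lambda>k. u k + v k) = (\<lambda>j. Dop l u j + Dop l v j)"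
  by (auto simp: Dop_def fun_eq_iff algebra_simps)

lemma Dop_smul: "Dop l (\<lambda>k. c * u k) = (\<lambda>j. c * Dop l u j)"
  by (auto simp: Dop_def fun_eq_iff algebra_simps)

lemma Mop_add: "fsup u \<Longrightarrow> fsup v \<Longrightarrow> Mop l a (\<lambda>k. u k + v k) = (\<lambda>j. Mop l a u j + Mop l a v j)"
  unfolding Mop_def
proof
  fix j assume u: "fsup u" and v: "fsup v"
  have "(\<Sum>k. Mmat l a j k * (u k + v k)) = (\<Sum>k. Mmat l a j k * u k + Mmat l a j k * v k)"
    by (simp add: algebra_simps)
  also have "\<dots> = (\<Sum>k. Mmat l a j k * u k) + (\<Sum>k. Mmat l a j k * v k)"
    by (rule suminf_add[symmetric]) (use fsup_summ[OF u] fsup_summ[OF v] in auto)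
  finally show "(\<Sum>k. Mmat l a j k * (u k + v k)) = (\<Sum>k. Mmat l a j k * u k) + (\<Sum>k. Mmat l a j k * v k)" .
qed

lemma Mop_smul: "fsup u \<Longrightarrow> Mop l a (\<lambda>k. c * u k) = (\<lambda>j. c * Mop l a u j)"
  unfolding Mop_def
proof
  fix j assume u: "fsup u"
  have "(\<Sum>k. Mmat l a j k * (c * u k)) = (\<Sum>k. c * (Mmat l a j k * u k))"
    by (simp add: algebra_simps)
  also have "\<dots> = c * (\<Sum>k. Mmat l a j k * u k)"
    by (rule suminf_mult) (use fsup_summ[OF u] in auto)
  finally show "(\<Sum>k. Mmat l a j k * (c * u k)) = c * (\<Sum>k. Mmat l a j k * u k)" .
qed

lemma Lop_add: "fsup u \<Longrightarrow> fsup v \<Longrightarrow> Lop N a (\<lambda>k. u k + v k) = (\<lambda>j. Lop N a u j + Lop N a v j)"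
  by (simp add: Lop_def fun_eq_iff Dop_add Mop_add fsup_Dop Schain_add sum.distrib algebra_simps)

lemma Lop_smul: "fsup u \<Longrightarrow> Lop N a (\<lambda>k. c * u k) = (\<lambda>j. c * Lop N a u j)"
  by (simp add: Lop_def fun_eq_iff Dop_smul Mop_smul fsup_Dop Schain_smul sum_distrib_left algebra_simps)


lemma BLop_add:
  assumes Badd: "\<forall>i<N. \<forall>u \<in> l2w Dr. \<forall>v \<in> l2w Dr. B i (\<lambda>k. u k + v k) = B i u + B i v"
    and u: "fsup u" and v: "fsup v"
  shows "BLop N B a (\<lambda>k. u k + v k) = (\<lambda>j. BLop N B a u j + BLop N B a v j)"
  using Badd fsup_l2w[OF u] fsup_l2w[OF v] by (auto simp: BLop_def fun_eq_iff Lop_add[OF u v])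

lemma BLop_smul:
  assumes Bsm: "\<forall>i<N. \<forall>c. \<forall>u \<in> l2w Dr. B i (\<lambda>k. c * u k) = c * B i u"
    and u: "fsup u"
  shows "BLop N B a (\<lambda>k. c * u k) = (\<lambda>j. c * BLop N B a u j)"
  using Bsm fsup_l2w[OF u] by (auto simp: BLop_def fun_eq_iff Lop_smul[OF u])

lemma trunc_add: "trunc n (\<lambda>k. u k + v k) = (\<lambda>k. trunc n u k + trunc n v k)"
  by (auto simp: trunc_def fun_eq_iff)

lemma trunc_smul: "trunc n (\<lambda>k. c * u k) = (\<lambda>k. c * trunc n u k)"
  by (auto simp: trunc_def fun_eq_iff)

lemma Rn_add: "Rn N n (\<lambda>k. u k + v k) = (\<lambda>k. Rn N n u k + Rn N n v k)"
  by (auto simp: Rn_def trunc_def Rop_rc fun_eq_iff ring_distribs mult_ac)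

lemma Rn_smul: "Rn N n (\<lambda>k. c * u k) = (\<lambda>k. c * Rn N n u k)"
  by (auto simp: Rn_def trunc_def Rop_rc fun_eq_iff ring_distribs mult_ac)

lemma An_add:
  assumes Badd: "\<forall>i<N. \<forall>u \<in> l2w Dr. \<forall>v \<in> l2w Dr. B i (\<lambda>k. u k + v k) = B i u + B i v"
  shows "An N B a n (\<lambda>k. u k + v k) = (\<lambda>k. An N B a n u k + An N B a n v k)"
  unfolding An_def trunc_add BLop_add[OF Badd fsup_trunc fsup_trunc] by simp

lemma An_smul:
  assumes Bsm: "\<forall>i<N. \<forall>c. \<forall>u \<in> l2w Dr. B i (\<lambda>k. c * u k) = c * B i u"
  shows "An N B a n (\<lambda>k. c * u k) = (\<lambda>k. c * An N B a n u k)"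
  unfolding An_def trunc_smul BLop_smul[OF Bsm fsup_trunc] by simp

lemma fin_trunc: "x \<in> fin_space n \<Longrightarrow> trunc n x = x"
  unfolding fin_space_def trunc_def by (auto simp: fun_eq_iff not_less)

lemma fin_fsup: "x \<in> fin_space n \<Longrightarrow> fsup x"
  unfolding fin_space_def fsup_def by blast

lemma Rn_fin: "x \<in> fin_space n \<Longrightarrow> Rn N n x = Rop N x"
  unfolding Rn_def fin_trunc by (auto simp: fin_space_def trunc_def Rop_def fun_eq_iff not_less)

lemma An_Rn: "x \<in> fin_space n \<Longrightarrow> An N B a n (Rn N n x) = trunc n (BLop N B a (Rop N x))"
proof -
  assume x: "x \<in> fin_space n"
  have "trunc n (Rop N x) = Rop N x"
    using x by (auto simp: fin_space_def trunc_def Rop_def fun_eq_iff not_less)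
  then show ?thesis unfolding An_def Rn_fin[OF x] by simp
qed

definition Lo :: "nat \<Rightarrow> (nat \<Rightarrow> real \<Rightarrow> complex) \<Rightarrow> cseq \<Rightarrow> cseq" where
  "Lo N a u = (\<lambda>j. (\<Sum>lam = 1..N - 1. Schain lam (N - lam) (Mop lam (a lam) (Dop lam u)) j)
      + Schain 0 N (Mop 0 (a 0) u) j)"

lemma BLop_tail:
  assumes N: "N \<ge> 1" and j: "j \<ge> N"
  shows "BLop N B a (Rop N x) j = x j + Lo N a (Rop N x) (j - N)"
proof -
  have jN: "j - N + N = j" using j by simp
  have j0: "real j \<noteq> 0" using N j by simp
  have "Dop N (Rop N x) (j - N) = x j"
    unfolding Dop_def Rop_def jN using j j0 by (simp add: field_simps)
  then show ?thesis using j unfolding BLop_def Lop_def Lo_def by (simp add: add.assoc)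
qed


lemma pow_ratio2:
  fixes a b K s :: real
  assumes a1: "1 \<le> a" and ab: "a \<le> b" and bK: "b \<le> K * a"
  shows "b powr s \<le> K powr \<bar>s\<bar> * a powr s"
proof -
  have a0: "0 < a" using a1 by linarith
  have b0: "0 < b" using a1 ab by linarith
  have "1 * a \<le> K * a" using ab bK by linarith
  then have K1: "1 \<le> K" using a0 by (simp only: mult_le_cancel_right)
  have as: "a powr s \<ge> 0" by (rule powr_ge_zero)
  show ?thesis
  proof (cases "s \<ge> 0")
    case True
    have "b powr s \<le> (K * a) powr s" by (rule powr_mono2[OF True]) (use b0 bK in linarith)+
    also have "\<dots> = K powr \<bar>s\<bar> * a powr s" using True K1 a0 by (simp add: powr_mult)
    finally show ?thesis .
  next
    case False
    have "b powr s \<le> a powr s" by (rule powr_mono2') (use False a0 ab in linarith)+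
    also have "1 \<le> K powr \<bar>s\<bar>" by (rule ge_one_powr_ge_zero[OF K1]) simp
    then have "1 * a powr s \<le> K powr \<bar>s\<bar> * a powr s" by (rule mult_right_mono[OF _ as])
    then have "a powr s \<le> K powr \<bar>s\<bar> * a powr s" by simp
    finally show ?thesis .
  qed
qed

lemma nrm_split:
  assumes v: "v \<in> l2w \<mu>"
  shows "nrm \<mu> v = nrm \<mu> (trunc n v) + (\<Sum>k. if k < n then 0 else (cmod (v k))^2 * (real k + 1) powr (2 * \<mu>))"
proof -
  let ?f = "\<lambda>k. (cmod (v k))^2 * (real k + 1) powr (2 * \<mu>)"
  have s: "summable ?f" using v unfolding l2w_def by simp
  have s1: "summable (\<lambda>k. if k < n then ?f k else 0)"
    by (rule summable_finite[of "{..<n}"]) auto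
  have s2: "summable (\<lambda>k. if k < n then 0 else ?f k)"
    by (rule summable_comparison_test[OF _ s]) auto
  have e: "(\<lambda>k. (cmod (trunc n v k))^2 * (real k + 1) powr (2 * \<mu>)) = (\<lambda>k. if k < n then ?f k else 0)"
    by (auto simp: trunc_def fun_eq_iff)
  have "nrm \<mu> v = (\<Sum>k. (if k < n then ?f k else 0) + (if k < n then 0 else ?f k))"
    unfolding nrm_def by (rule suminf_cong) simp
  also have "\<dots> = (\<Sum>k. if k < n then ?f k else 0) + (\<Sum>k. if k < n then 0 else ?f k)"
    by (rule suminf_add[OF s1 s2, symmetric])
  finally show ?thesis unfolding nrm_def e .
qed

lemma nrm_pos:
  assumes v: "v \<in> l2w \<mu>" and nz: "v \<noteq> (\<lambda>_. 0)"
  shows "nrm \<mu> v > 0"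
proof -
  let ?f = "\<lambda>k. (cmod (v k))^2 * (real k + 1) powr (2 * \<mu>)"
  have s: "summable ?f" using v unfolding l2w_def by simp
  obtain k where k: "v k \<noteq> 0" using nz by auto
  have "?f k \<noteq> 0" using k by simp
  then have "nrm \<mu> v \<noteq> 0" unfolding nrm_def using suminf_eq_zero_iff[OF s] by auto
  moreover have "nrm \<mu> v \<ge> 0" using v by (rule nrm_nonneg)
  ultimately show ?thesis by linarith
qed

lemma tail_bound:
  assumes y: "y \<in> l2w (\<mu>+1)" and nN: "N \<le> n"
    and t: "\<And>k. k \<ge> n \<Longrightarrow> t k = y (k - N)"
  shows "(\<Sum>k. if k < n then 0 else (cmod (t k))^2 * (real k + 1) powr (2 * \<mu>))
     \<le> (real N + 1) powr \<bar>2*\<mu>\<bar> / (real (n - N) + 1)^2 * nrm (\<mu>+1) y"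
proof -
  define g where "g i = (cmod (y i))^2 * (real i + 1) powr (2 * (\<mu>+1))" for i
  define c where "c = (real N + 1) powr \<bar>2*\<mu>\<bar> / (real (n - N) + 1)^2"
  have c0: "c \<ge> 0" unfolding c_def by simp
  have g0: "g i \<ge> 0" for i unfolding g_def by simp
  have sg: "summable g" using y unfolding g_def l2w_def by simp
  define h where "h k = (if k < N then 0 else c * g (k - N))" for k
  have hs: "(\<lambda>k. h (k + N)) = (\<lambda>k. c * g k)" unfolding h_def by auto
  have sh: "summable h"
    using summable_iff_shift[of h N] hs sg by (simp add: summable_mult)
  have sumh: "suminf h = c * suminf g"
    using suminf_split_initial_segment[OF sh, of N] hs suminf_mult[OF sg, of c]
    by (simp add: h_def)
  let ?f = "\<lambda>k. if k < n then 0 else (cmod (t k))^2 * (real k + 1) powr (2 * \<mu>)"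
  have le: "?f k \<le> h k" for k
  proof (cases "k < n")
    case True then show ?thesis unfolding h_def using c0 g0 by simp
  next
    case False
    then have kn: "k \<ge> n" by simp
    define i where "i = k - N"
    have ki: "k = i + N" using kn nN unfolding i_def by simp
    have ii: "real i + 1 \<ge> real (n - N) + 1" using kn nN unfolding i_def by simp
    have w1: "(real k + 1) powr (2 * \<mu>) \<le> (real N + 1) powr \<bar>2*\<mu>\<bar> * (real i + 1) powr (2 * \<mu>)"
      unfolding ki by (rule pow_ratio2) (auto simp: algebra_simps)
    have w2: "(real i + 1) powr (2 * \<mu>) \<le> (real i + 1) powr (2 * (\<mu>+1)) / (real (n - N) + 1)^2"
    proof -
      have "(real i + 1) powr (2 * \<mu>) * (real (n - N) + 1)^2 \<le> (real i + 1) powr (2 * \<mu>) * (real i + 1)^2"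
        using ii by (intro mult_left_mono power_mono) auto
      then show ?thesis unfolding w_succ by (simp add: divide_simps)
    qed
    have "?f k = (cmod (y i))^2 * (real k + 1) powr (2 * \<mu>)"
      using False t[OF kn] unfolding i_def by simp
    also have "\<dots> \<le> (cmod (y i))^2 * ((real N + 1) powr \<bar>2*\<mu>\<bar> * ((real i + 1) powr (2 * (\<mu>+1)) / (real (n - N) + 1)^2))"
      using w1 w2 by (intro mult_left_mono order_trans[OF w1] mult_left_mono) auto
    also have "\<dots> = c * g i" unfolding c_def g_def by (simp add: field_simps)
    also have "\<dots> = h k" unfolding h_def i_def using kn nN by simp
    finally show ?thesis .
  qed
  have f0: "?f k \<ge> 0" for k by simp
  have sf: "summable ?f" by (rule summable_comparison_test[OF _ sh]) (use le f0 in auto)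
  have "suminf ?f \<le> suminf h" by (rule suminf_le[OF le sf sh])
  then show ?thesis unfolding sumh c_def g_def nrm_def .
qed


lemma sqrt_le_sq:
  assumes "0 \<le> x" "0 \<le> y" "sqrt x \<le> C * sqrt y"
  shows "x \<le> C^2 * y"
proof -
  have "(sqrt x)^2 \<le> (C * sqrt y)^2" using assms by (intro power_mono) auto
  then show ?thesis using assms by (simp add: power_mult_distrib)
qed

lemma ratio_le:
  assumes "0 < y" "0 \<le> x" "0 \<le> K" "x \<le> K * y"
  shows "sqrt x / sqrt y \<le> sqrt K"
proof -
  have "sqrt x \<le> sqrt (K * y)" using assms by simp
  also have "\<dots> = sqrt K * sqrt y" by (simp add: real_sqrt_mult)
  finally show ?thesis using assms by (simp add: divide_le_eq)
qed

theorem lemma4p4: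
  fixes N :: nat and a :: "nat \<Rightarrow> real \<Rightarrow> complex"
    and B :: "nat \<Rightarrow> cseq \<Rightarrow> complex" and D lam :: int
  assumes N1: "N \<ge> 1"
    and a_cont: "\<forall>l<N. continuous_on {-1..1} (a l)"
    and M_bdd: "\<forall>l<N. \<forall>\<mu>. \<exists>C. \<forall>v \<in> l2w \<mu>.
                   (\<forall>j. summable (\<lambda>k. Mmat l (a l) j k * v k))
                   \<and> Mop l (a l) v \<in> l2w \<mu>
                   \<and> l2norm \<mu> (Mop l (a l) v) \<le> C * l2norm \<mu> v"
    and B_add: "\<forall>i<N. \<forall>u \<in> l2w (real_of_int D). \<forall>v \<in> l2w (real_of_int D).
                   B i (\<lambda>k. u k + v k) = B i u + B i v"
    and B_smult: "\<forall>i<N. \<forall>c. \<forall>u \<in> l2w (real_of_int D). B i (\<lambda>k. c * u k) = c * B i u"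
    and B_bdd: "\<exists>C. \<forall>i<N. \<forall>u \<in> l2w (real_of_int D).
                   cmod (B i u) \<le> C * l2norm (real_of_int D) u"
    and lam_ge: "lam \<ge> D - 1"
    and inv: "bij_betw (BLop N B a) (l2w (real_of_int lam + 1)) (l2w (real_of_int lam))"
    and bdd: "\<exists>C. \<forall>u \<in> l2w (real_of_int lam + 1).
                l2norm (real_of_int lam) (BLop N B a u) \<le> C * l2norm (real_of_int lam + 1) u"
    and inv_bdd: "\<exists>C. \<forall>f \<in> l2w (real_of_int lam).
                l2norm (real_of_int lam + 1) (the_inv_into (l2w (real_of_int lam + 1)) (BLop N B a) f)
                  \<le> C * l2norm (real_of_int lam) f"
  shows "\<exists>C. \<forall>\<^sub>F n in sequentially.
           bij_betw (An N B a n \<circ> Rn N n) (fin_space n) (fin_space n)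
           \<and> fin_opnorm (real_of_int lam) n (An N B a n \<circ> Rn N n) \<le> C
           \<and> fin_opnorm (real_of_int lam) n (the_inv_into (fin_space n) (An N B a n \<circ> Rn N n)) \<le> C"
proof -
  define Lr where "Lr = real_of_int lam"
  have bM: "bnd \<mu> \<mu> (Mop l (a l))" if l: "l < N" for l \<mu>
  proof (rule bnd_from)
    obtain C where C: "\<forall>v \<in> l2w \<mu>. (\<forall>j. summable (\<lambda>k. Mmat l (a l) j k * v k))
                   \<and> Mop l (a l) v \<in> l2w \<mu> \<and> l2norm \<mu> (Mop l (a l) v) \<le> C * l2norm \<mu> v"
      using M_bdd[rule_format, OF l, of \<mu>] by (elim exE)
    have "\<forall>v\<in>l2w \<mu>. Mop l (a l) v \<in> l2w \<mu> \<and> l2norm \<mu> (Mop l (a l) v) \<le> C * l2norm \<mu> v"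
    proof
      fix v assume "v \<in> l2w \<mu>"
      then have "(\<forall>j. summable (\<lambda>k. Mmat l (a l) j k * v k))
                   \<and> Mop l (a l) v \<in> l2w \<mu> \<and> l2norm \<mu> (Mop l (a l) v) \<le> C * l2norm \<mu> v"
        using C by (rule bspec[rotated])
      then show "Mop l (a l) v \<in> l2w \<mu> \<and> l2norm \<mu> (Mop l (a l) v) \<le> C * l2norm \<mu> v" by (elim conjE) (rule conjI)
    qed
    then show "\<exists>C. \<forall>v\<in>l2w \<mu>. Mop l (a l) v \<in> l2w \<mu> \<and> l2norm \<mu> (Mop l (a l) v) \<le> C * l2norm \<mu> v"
      by (rule exI)
  qed
  have bLo: "bnd Lr (Lr+1) (\<lambda>x. Lo N a (Rop N x))"
  proof -
    have t1: "bnd Lr (Lr+1) (\<lambda>x j. Schain l (N-l) (Mop l (a l) (Dop l (Rop N x))) j)"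
      if l: "l \<in> {1..N-1}" for l
    proof -
      have b: "bnd Lr (Lr + real (N-l)) (\<lambda>x. Schain l (N-l) (Mop l (a l) (Dop l (Rop N x))))"
        using l by (intro bnd_comp[OF bnd_comp[OF bnd_comp[OF bnd_Rop[OF N1] bnd_Dop] bM] bnd_Schain]) auto
      have le: "Lr + 1 \<le> Lr + real (N-l)" using l by auto
      show ?thesis using bnd_mono[OF le b] by simp
    qed
    have t0: "bnd Lr (Lr+1) (\<lambda>x j. Schain 0 N (Mop 0 (a 0) (Rop N x)) j)"
    proof -
      have "bnd Lr (Lr + 1 + real (N-1)) (\<lambda>x. Schain 1 (N-1) (Sop 0 (Mop 0 (a 0) (Rop N x))))"
        using N1 by (intro bnd_comp[OF bnd_comp[OF bnd_comp[OF bnd_Rop[OF N1] bM] bnd_Sop0] bnd_Schain]) auto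
      moreover have "Schain 0 N v = Schain 1 (N-1) (Sop 0 v)" for v
        using Schain_split[of 0 "N-1" v] N1 by simp
      ultimately have "bnd Lr (Lr + 1 + real (N-1)) (\<lambda>x. Schain 0 N (Mop 0 (a 0) (Rop N x)))" by simp
      then show ?thesis by (rule bnd_mono[rotated]) simp
    qed
    have "bnd Lr (Lr+1) (\<lambda>x j. (\<Sum>l\<in>{1..N-1}. Schain l (N-l) (Mop l (a l) (Dop l (Rop N x))) j)
             + Schain 0 N (Mop 0 (a 0) (Rop N x)) j)"
      by (intro bnd_add t0 bnd_sum[where F="\<lambda>l x j. Schain l (N-l) (Mop l (a l) (Dop l (Rop N x))) j"] t1) auto
    then show ?thesis unfolding Lo_def by simp
  qed
  obtain CL where CL: "CL \<ge> 0" "\<forall>v\<in>l2w Lr. Lo N a (Rop N v) \<in> l2w (Lr+1) \<and> nrm (Lr+1) (Lo N a (Rop N v)) \<le> CL * nrm Lr v"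
    using bLo unfolding bnd_def by blast
  obtain CR where CR: "CR \<ge> 0" "\<forall>v\<in>l2w Lr. Rop N v \<in> l2w (Lr+1) \<and> nrm (Lr+1) (Rop N v) \<le> CR * nrm Lr v"
    using bnd_Rop[OF N1, of Lr] unfolding bnd_def by blast
  obtain Ci where Ci: "\<forall>f \<in> l2w Lr. l2norm (Lr + 1) (the_inv_into (l2w (Lr + 1)) (BLop N B a) f) \<le> Ci * l2norm Lr f"
    using inv_bdd unfolding Lr_def by blast
  obtain Cb where Cb: "\<forall>u \<in> l2w (Lr + 1). l2norm Lr (BLop N B a u) \<le> Cb * l2norm (Lr + 1) u"
    using bdd unfolding Lr_def by blast
  have inv': "bij_betw (BLop N B a) (l2w (Lr + 1)) (l2w Lr)" using inv unfolding Lr_def .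
  define K0 :: real where "K0 = (2^(N - 1) * fact (N - 1))^2"
  define A where "A = K0 * Ci^2 + 1"
  define Kw where "Kw = (real N + 1) powr \<bar>2*Lr\<bar>"
  define U where "U = Cb^2 * CR"
  define n0 where "n0 = N + nat \<lceil>2*A*Kw*CL\<rceil> + 1"
  have K0: "K0 \<ge> 0" unfolding K0_def by simp
  have A1: "A \<ge> 1" unfolding A_def using K0 by simp
  have Kw0: "Kw \<ge> 0" unfolding Kw_def by simp
  have U0: "U \<ge> 0" unfolding U_def using CR by simp
  define F where "F n = An N B a n \<circ> Rn N n" for n
  have Fadd: "F n (\<lambda>k. x k + y k) = (\<lambda>k. F n x k + F n y k)" for n x y
    unfolding F_def comp_def Rn_add An_add[OF B_add] ..
  have Fsmul: "F n (\<lambda>k. c * x k) = (\<lambda>k. c * F n x k)" for n c x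
    unfolding F_def comp_def Rn_smul An_smul[OF B_smult] ..
  have Finto: "F n x \<in> fin_space n" for n x
    unfolding F_def An_def fin_space_def trunc_def by simp
  have key: "nrm Lr x \<le> 2 * A * nrm Lr (F n x) \<and> nrm Lr (F n x) \<le> U * nrm Lr x"
    if n: "n \<ge> n0" and x: "x \<in> fin_space n" for n x
  proof -
    have nN: "N \<le> n" using n unfolding n0_def by simp
    have fx: "fsup x" using x by (rule fin_fsup)
    have xl: "x \<in> l2w Lr" using fx by (rule fsup_l2w)
    define u where "u = Rop N x"
    have ul: "u \<in> l2w (Lr+1)" unfolding u_def using fx by (intro fsup_l2w fsup_Rop)
    define T where "T = BLop N B a u"
    have Tl: "T \<in> l2w Lr" unfolding T_def using bij_betwE[OF inv'] ul by blast
    have injB: "inj_on (BLop N B a) (l2w (Lr + 1))" using inv' by (rule bij_betw_imp_inj_on)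
    have tinv: "the_inv_into (l2w (Lr + 1)) (BLop N B a) T = u"
      unfolding T_def by (rule the_inv_into_f_f[OF injB ul])
    have Fx: "F n x = trunc n T" unfolding F_def T_def u_def comp_def by (rule An_Rn[OF x])
    have nx: "nrm Lr x \<ge> 0" using xl by (rule nrm_nonneg)
    have nu: "nrm (Lr+1) u \<ge> 0" using ul by (rule nrm_nonneg)
    have nT: "nrm Lr T \<ge> 0" using Tl by (rule nrm_nonneg)
    have "sqrt (nrm (Lr+1) u) \<le> Ci * sqrt (nrm Lr T)"
      using Ci Tl tinv by (auto simp: l2norm_nrm)
    then have uT: "nrm (Lr+1) u \<le> Ci^2 * nrm Lr T" using nu nT by (rule sqrt_le_sq[rotated 2])
    have xu: "nrm Lr x \<le> K0 * nrm (Lr+1) u"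
      unfolding K0_def u_def by (rule Rop_lower[OF N1]) (use ul u_def in simp)
    have xT: "nrm Lr x \<le> A * nrm Lr T"
    proof -
      have "K0 * nrm (Lr+1) u \<le> K0 * (Ci^2 * nrm Lr T)" by (rule mult_left_mono[OF uT K0])
      then have "nrm Lr x \<le> K0 * (Ci^2 * nrm Lr T)" using xu by linarith
      also have "\<dots> \<le> A * nrm Lr T" unfolding A_def using nT by (simp add: algebra_simps)
      finally show ?thesis .
    qed
    have "sqrt (nrm Lr T) \<le> Cb * sqrt (nrm (Lr+1) u)"
      using Cb ul unfolding T_def by (auto simp: l2norm_nrm)
    then have Tu: "nrm Lr T \<le> Cb^2 * nrm (Lr+1) u" using nT nu by (rule sqrt_le_sq[rotated 2])
    have uxb: "nrm (Lr+1) u \<le> CR * nrm Lr x" using CR xl unfolding u_def by blast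
    define tl where "tl = (\<Sum>k. if k < n then 0 else (cmod (T k))^2 * (real k + 1) powr (2 * Lr))"
    have split: "nrm Lr T = nrm Lr (trunc n T) + tl" unfolding tl_def by (rule nrm_split[OF Tl])
    have sf: "summable (\<lambda>k. if k < n then 0 else (cmod (T k))^2 * (real k + 1) powr (2 * Lr))"
      by (rule summable_comparison_test[OF _ l2w_summ[OF Tl]]) auto
    have tl0: "tl \<ge> 0" unfolding tl_def by (rule suminf_nonneg[OF sf]) simp
    have yl: "Lo N a u \<in> l2w (Lr+1)" and yb: "nrm (Lr+1) (Lo N a u) \<le> CL * nrm Lr x"
      using CL xl unfolding u_def by auto
    have tT: "T k = Lo N a u (k - N)" if k: "k \<ge> n" for k
    proof -
      have "x k = 0" using x k unfolding fin_space_def by auto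
      then show ?thesis unfolding T_def u_def using BLop_tail[OF N1, of k B a x] k nN by simp
    qed
    have tlb: "tl \<le> Kw / (real (n - N) + 1)^2 * nrm (Lr+1) (Lo N a u)"
      unfolding tl_def Kw_def by (rule tail_bound[OF yl nN tT])
    define q where "q = Kw / (real (n - N) + 1)^2 * CL"
    have q0: "q \<ge> 0" unfolding q_def using Kw0 CL by simp
    have tlq: "tl \<le> q * nrm Lr x"
    proof -
      have "Kw / (real (n - N) + 1)^2 * nrm (Lr+1) (Lo N a u) \<le> Kw / (real (n - N) + 1)^2 * (CL * nrm Lr x)"
        by (rule mult_left_mono[OF yb]) (use Kw0 in simp)
      then have "tl \<le> Kw / (real (n - N) + 1)^2 * (CL * nrm Lr x)" using tlb by linarith
      then show ?thesis unfolding q_def by (simp add: mult.assoc)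
    qed
    have qA: "2 * A * q \<le> 1"
    proof -
      have m: "real (n - N) \<ge> 2*A*Kw*CL"
      proof -
        have "2*A*Kw*CL \<le> real (nat \<lceil>2*A*Kw*CL\<rceil>)" by linarith
        also have "\<dots> \<le> real (n - N)" using n unfolding n0_def by simp
        finally show ?thesis .
      qed
      have p: "real (n - N) + 1 \<le> (real (n - N) + 1)^2" by (simp add: power2_eq_square)
      have "2 * A * Kw * CL \<le> (real (n - N) + 1)^2" using m p by linarith
      then show ?thesis unfolding q_def by (simp add: divide_simps)
    qed
    have lower: "nrm Lr x \<le> 2 * A * nrm Lr (F n x)"
    proof -
      have h1: "2 * A * tl \<le> 2 * A * q * nrm Lr x" using tlq A1 by (simp add: mult.assoc)
      have h2: "2 * A * q * nrm Lr x \<le> 1 * nrm Lr x" using qA nx by (rule mult_right_mono)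
      have "2 * A * nrm Lr (F n x) = 2 * A * nrm Lr T - 2 * A * tl" unfolding Fx split by (simp add: algebra_simps)
      then show ?thesis using h1 h2 xT by linarith
    qed
    have upper: "nrm Lr (F n x) \<le> U * nrm Lr x"
    proof -
      have "nrm Lr (F n x) \<le> nrm Lr T" unfolding Fx using split tl0 by linarith
      also have "\<dots> \<le> Cb^2 * (CR * nrm Lr x)" using Tu mult_left_mono[OF uxb, of "Cb^2"] by simp
      finally show ?thesis unfolding U_def by (simp add: mult.assoc)
    qed
    show ?thesis using lower upper by blast
  qed
  define C where "C = sqrt U + sqrt (2*A)"
  have ev: "bij_betw (F n) (fin_space n) (fin_space n) \<and> fin_opnorm Lr n (F n) \<le> C
      \<and> fin_opnorm Lr n (the_inv_into (fin_space n) (F n)) \<le> C" if n: "n \<ge> n0" for n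
  proof -
    have F0: "F n (\<lambda>_. 0) = (\<lambda>_. 0)" using Fsmul[of n 0 "\<lambda>_. 0"] by simp
    have nrm0: "nrm Lr (\<lambda>_. 0) = 0" by (simp add: nrm_def)
    have finl: "x \<in> fin_space n \<Longrightarrow> x \<in> l2w Lr" for x by (intro fsup_l2w fin_fsup)
    have inj: "inj_on (F n) (fin_space n)"
    proof (rule inj_onI)
      fix x y assume x: "x \<in> fin_space n" and y: "y \<in> fin_space n" and eq: "F n x = F n y"
      define z where "z = (\<lambda>k. x k + (-1) * y k)"
      have zf: "z \<in> fin_space n" using x y unfolding fin_space_def z_def by auto
      have "F n z = (\<lambda>k. F n x k + (-1) * F n y k)" unfolding z_def Fadd Fsmul ..
      then have Fz: "F n z = (\<lambda>_. 0)" using eq by simp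
      have "nrm Lr z \<le> 2*A*nrm Lr (F n z)" using key[OF n zf] by blast
      then have z0: "nrm Lr z \<le> 0" using Fz nrm0 by simp
      have "z = (\<lambda>_. 0)"
      proof (rule ccontr)
        assume "z \<noteq> (\<lambda>_. 0)"
        then have "nrm Lr z > 0" using finl[OF zf] by (intro nrm_pos)
        then show False using z0 by simp
      qed
      then show "x = y" unfolding z_def by (auto simp: fun_eq_iff)
    qed
    have surj: "F n ` fin_space n = fin_space n" by (rule inj_surj_fin[OF Fadd Fsmul Finto inj])
    have bij: "bij_betw (F n) (fin_space n) (fin_space n)" unfolding bij_betw_def using inj surj by blast
    have n1: "n \<ge> 1" using n N1 unfolding n0_def by simp
    have ne: "{x \<in> fin_space n. x \<noteq> (\<lambda>_. 0)} \<noteq> {}"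
    proof -
      have "ee 0 \<in> {x \<in> fin_space n. x \<noteq> (\<lambda>_. 0)}"
        using n1 unfolding ee_def fin_space_def by (auto simp: fun_eq_iff)
      then show ?thesis by blast
    qed
    have sU: "sqrt U \<le> C" and sA: "sqrt (2*A) \<le> C" unfolding C_def using A1 U0 by auto
    have op1: "fin_opnorm Lr n (F n) \<le> C"
      unfolding fin_opnorm_def
    proof (rule cSUP_least[OF ne])
      fix x assume "x \<in> {x \<in> fin_space n. x \<noteq> (\<lambda>_. 0)}"
      then have x: "x \<in> fin_space n" and xnz: "x \<noteq> (\<lambda>_. 0)" by auto
      have "l2norm Lr (F n x) / l2norm Lr x \<le> sqrt U"
        unfolding l2norm_nrm
        by (rule ratio_le) (use nrm_pos[OF finl[OF x] xnz] nrm_nonneg[OF finl[OF Finto]] U0 key[OF n x] in auto)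
      then show "l2norm Lr (F n x) / l2norm Lr x \<le> C" using sU by linarith
    qed
    have op2: "fin_opnorm Lr n (the_inv_into (fin_space n) (F n)) \<le> C"
      unfolding fin_opnorm_def
    proof (rule cSUP_least[OF ne])
      fix y assume "y \<in> {x \<in> fin_space n. x \<noteq> (\<lambda>_. 0)}"
      then have y: "y \<in> fin_space n" and ynz: "y \<noteq> (\<lambda>_. 0)" by auto
      define x where "x = the_inv_into (fin_space n) (F n) y"
      have yim: "y \<in> F n ` fin_space n" using y surj by simp
      have x: "x \<in> fin_space n" unfolding x_def by (rule the_inv_into_into[OF inj yim]) simp
      have Fx: "F n x = y" unfolding x_def by (rule f_the_inv_into_f[OF inj yim])
      have xnz: "x \<noteq> (\<lambda>_. 0)" using Fx F0 ynz by auto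
      have "l2norm Lr x / l2norm Lr y \<le> sqrt (2*A)"
        unfolding l2norm_nrm
        by (rule ratio_le) (use nrm_pos[OF finl[OF y] ynz] nrm_nonneg[OF finl[OF x]] A1 key[OF n x] Fx in auto)
      then show "l2norm Lr (the_inv_into (fin_space n) (F n) y) / l2norm Lr y \<le> C"
        using sA unfolding x_def by linarith
    qed
    show ?thesis using bij op1 op2 by blast
  qed
  show ?thesis
    unfolding eventually_sequentially
    by (rule exI[of _ C], rule exI[of _ n0]) (use ev in \<open>simp add: F_def Lr_def\<close>)
qed


end
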